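(* Let $H\subset S_n$ be a permutation group, let $A\trianglelefteq\mathbb{Z}_2^{*n}$ be an $H$-invariant normal subgroup, and let $\Gamma=\mathbb{Z}_2^{*n}/A$. Let $u$ be the fundamental representation of the quantum group $\mathbb{G}=\hat\Gamma\rtimes H$. Then for all $k,l\in\mathbb{N}_0$, $$\mathrm{Mor}(u^{\otimes k},u^{\otimes l})=\mathrm{span}\{\hat T^{\mathbf{a}\mathbf{b}}_H\mid[\mathbf{a},\mathbf{b}]\in W_H(k,l)\text{ such that }g_{\mathbf{a}\mathbf{b}^*}\in A\},$$ and the family $\{\hat T^{\mathbf{a}\mathbf{b}}_H\}_{[\mathbf{a},\mathbf{b}]\in W_H(k,l)}$ (one map per class) is linearly independent.
   Context: $\mathbb{Z}_2^{*n}$ is the group generated by $1,\dots,n$ subject to $i^2=e$; $S_n$ acts on it by permuting generators, and $A$ is $H$-invariant if $\sigma(A)=A$ for all $\sigma\in H$. For a tuple $\mathbf{a}=(a_1,\dots,a_k)$ over $\{1,\dots,n\}$, $\mathbf{a}^*$ is the reversed tuple, $\mathbf{a}\mathbf{b}^*$ denotes concatenation, and $g_{\mathbf{c}}=c_1c_2\cdots$ is the corresponding group element (so $g_{\mathbf{a}\mathbf{b}^*}=g_{\mathbf{a}}g_{\mathbf{b}}^{-1}$). Quantum groups: an orthogonal compact matrix quantum group is $(O(\mathbb{G}),u)$ with $O(\mathbb{G})$ a $*$-algebra generated by entries of $u\in M_n(O(\mathbb{G}))$, $u_{ij}=u_{ij}^*$, $uu^t=u^tu=1$, and $u_{ij}\mapsto\sum_k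 u_{ik}\otimes u_{kj}$ extending to a $*$-homomorphism; $\mathrm{Mor}(u^{\otimes k},u^{\otimes l})=\{T\colon(\mathbb{C}^n)^{\otimes k}\to(\mathbb{C}^n)^{\otimes l}\mid Tu^{\otimes k}=u^{\otimes l}T\}$. $H$ is the quantum group $(O(H),v)$ with $v_{ij}(\sigma)=\delta_{i\sigma(j)}$. With $\gamma_i\in\mathbb{C}\Gamma$ the image of the generator $i$, $\hat\Gamma\rtimes H$ is the quantum group $(\mathbb{C}\Gamma\otimes O(H),u)$ with $u_{ij}=\gamma_i\otimes v_{ij}$. $W_H(k,l)$ is the set of orbits $[\mathbf{a},\mathbf{b}]$ of pairs $(\mathbf{a},\mathbf{b})\in\{1,\dots,n\}^k\times\{1,\dots,n\}^l$ under the diagonal action of $H$. $\hat T^{\mathbf{a}\mathbf{b}}_H\colon(\mathbb{C}^n)^{\otimes k}\to(\mathbb{C}^n)^{\otimes l}$ is the linear map with entries $[\hat T^{\mathbf{a}\mathbf{b}}_H]_{\mathbf{j}\mathbf{i}}=\#\{\phi\in H\mid\phi(\mathbf{a})=\mathbf{i},\phi(\mathbf{b})=\mathbf{j}\}$ (coefficient of $e_{j_1}\otimes\cdots\otimes e_{j_l}$ in the image of $e_{i_1}\otimes\cdots\otimes e_{i_k}$); it depends only on $[\mathbf{a},\mathbf{b}]$, and the condition $g_{\mathbf{a}\mathbf{b}^*}\in A$ depends only on the class since $A$ is $H$-invariant. *)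

theory Defs
  imports "HOL-Algebra.Sym_Groups" "HOL-Algebra.Coset" Complex_Main
begin

text \<open>Prepend a generator to a reduced word, cancelling since i*i = e.\<close>
fun cons_red :: "nat \<Rightarrow> nat list \<Rightarrow> nat list" where
  "cons_red a [] = [a]"
| "cons_red a (b # ys) = (if a = b then ys else a # b # ys)"

text \<open>Reduced form of a word = the group element g_c = c_1 c_2 ... c_m.\<close>
definition red :: "nat list \<Rightarrow> nat list" where
  "red xs = foldr cons_red xs []"

definition Z2free :: "nat \<Rightarrow> nat list monoid" where
  "Z2free n = \<lparr> carrier = {w. set w \<subseteq> {1..n} \<and> successively (\<noteq>) w},
                mult = (\<lambda>x y. foldr cons_red x y), one = [] \<rparr>"

definition Gam :: "nat \<Rightarrow> nat list set \<Rightarrow> nat list set monoid" where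
  "Gam n A = Z2free n Mod A"

definition gam :: "nat \<Rightarrow> nat list set \<Rightarrow> nat \<Rightarrow> nat list set" where
  "gam n A i = A #>\<^bsub>Z2free n\<^esub> [i]"

text \<open>Elements of C Gamma: finitely supported functions Gamma -> C; product = convolution.
  Elements of C Gamma (x) O(H) (H finite) are identified with functions H -> C Gamma,
  i.e. functions sigma -> x -> coefficient; the product is pointwise in sigma.\<close>
definition conv :: "('g, 'm) monoid_scheme \<Rightarrow> ('g \<Rightarrow> complex) \<Rightarrow> ('g \<Rightarrow> complex) \<Rightarrow> 'g \<Rightarrow> complex" where
  "conv G f g x = (\<Sum>y\<in>{y\<in>carrier G. f y \<noteq> 0}. f y * g (inv\<^bsub>G\<^esub> y \<otimes>\<^bsub>G\<^esub> x))"

definition amul :: "('g, 'm) monoid_scheme \<Rightarrow> ('p \<Rightarrow> 'g \<Rightarrow> complex) \<Rightarrow> ('p \<Rightarrow> 'g \<Rightarrow> complex) \<Rightarrow> 'p \<Rightarrow> 'g \<Rightarrow> complex" where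
  "amul G a b = (\<lambda>\<sigma>. conv G (a \<sigma>) (b \<sigma>))"

definition aone :: "('g, 'm) monoid_scheme \<Rightarrow> 'p \<Rightarrow> 'g \<Rightarrow> complex" where
  "aone G = (\<lambda>\<sigma> x. if x = \<one>\<^bsub>G\<^esub> then 1 else 0)"

text \<open>Fundamental representation u_{ij} = gamma_i (x) v_{ij}, with v_{ij}(sigma) = delta_{i, sigma(j)}.\<close>
definition uu :: "nat \<Rightarrow> nat list set \<Rightarrow> nat \<Rightarrow> nat \<Rightarrow> (nat \<Rightarrow> nat) \<Rightarrow> nat list set \<Rightarrow> complex" where
  "uu n A i j = (\<lambda>\<sigma> x. (if i = \<sigma> j then 1 else 0) * (if x = gam n A i then 1 else 0))"

definition utens :: "nat \<Rightarrow> nat list set \<Rightarrow> nat list \<Rightarrow> nat list \<Rightarrow> (nat \<Rightarrow> nat) \<Rightarrow> nat list set \<Rightarrow> complex" where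
  "utens n A is js = foldr (\<lambda>(i, j) acc. amul (Gam n A) (uu n A i j) acc) (zip is js) (aone (Gam n A))"

text \<open>Multi-indices of length k over {1..n} (basis of (C^n)^{(x)k}).\<close>
definition idx :: "nat \<Rightarrow> nat \<Rightarrow> nat list set" where
  "idx n k = {c. length c = k \<and> set c \<subseteq> {1..n}}"

text \<open>A linear map (C^n)^{(x)k} -> (C^n)^{(x)l} is its matrix T j i (j output, i input),
  vanishing outside the index sets.\<close>
definition linmaps :: "nat \<Rightarrow> nat \<Rightarrow> nat \<Rightarrow> (nat list \<Rightarrow> nat list \<Rightarrow> complex) set" where
  "linmaps n k l = {T. \<forall>j i. (j \<notin> idx n l \<or> i \<notin> idx n k) \<longrightarrow> T j i = 0}"

text \<open>Mor(u^{(x)k}, u^{(x)l}) = {T | T u^{(x)k} = u^{(x)l} T}; equality in C Gamma (x) O(H)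
  is checked at every sigma in H and every x in Gamma.\<close>
definition Mor :: "nat \<Rightarrow> (nat \<Rightarrow> nat) set \<Rightarrow> nat list set \<Rightarrow> nat \<Rightarrow> nat \<Rightarrow> (nat list \<Rightarrow> nat list \<Rightarrow> complex) set" where
  "Mor n H A k l = {T \<in> linmaps n k l. \<forall>j\<in>idx n l. \<forall>i\<in>idx n k. \<forall>\<sigma>\<in>H. \<forall>x\<in>carrier (Gam n A).
      (\<Sum>c\<in>idx n k. T j c * utens n A c i \<sigma> x) = (\<Sum>d\<in>idx n l. utens n A j d \<sigma> x * T d i)}"

definition cspan :: "('a \<Rightarrow> 'b \<Rightarrow> complex) set \<Rightarrow> ('a \<Rightarrow> 'b \<Rightarrow> complex) set" where
  "cspan S = {T. \<exists>F c. finite F \<and> F \<subseteq> S \<and> T = (\<lambda>j i. \<Sum>M\<in>F. c M * M j i)}"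

definition That :: "(nat \<Rightarrow> nat) set \<Rightarrow> nat list \<Rightarrow> nat list \<Rightarrow> nat list \<Rightarrow> nat list \<Rightarrow> complex" where
  "That H a b = (\<lambda>j i. of_nat (card {\<phi>\<in>H. map \<phi> a = i \<and> map \<phi> b = j}))"

definition WH :: "(nat \<Rightarrow> nat) set \<Rightarrow> nat \<Rightarrow> nat \<Rightarrow> nat \<Rightarrow> (nat list \<times> nat list) set set" where
  "WH H n k l = {{(map \<phi> a, map \<phi> b) | \<phi>. \<phi> \<in> H} | a b. a \<in> idx n k \<and> b \<in> idx n l}"

text \<open>hat T for an orbit class (independent of the chosen representative).\<close>
definition That_cls :: "(nat \<Rightarrow> nat) set \<Rightarrow> (nat list \<times> nat list) set \<Rightarrow> nat list \<Rightarrow> nat list \<Rightarrow> complex" where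
  "That_cls H w = (let p = (SOME p. p \<in> w) in That H (fst p) (snd p))"

end

theory Submission
  imports Defs
begin

lemma cons_red_succ: "successively (\<noteq>) ys \<Longrightarrow> successively (\<noteq>) (cons_red a ys)"
  by (cases ys) (auto simp: successively_Cons)

lemma cons_red_set: "set (cons_red a ys) \<subseteq> insert a (set ys)"
  by (cases ys) auto

lemma cons_red_invol: "successively (\<noteq>) z \<Longrightarrow> cons_red a (cons_red a z) = z"
proof (cases z)
  case (Cons b ys)
  assume s: "successively (\<noteq>) z"
  show ?thesis
  proof (cases "a = b")
    case True
    then show ?thesis using s Cons by (cases ys) (auto simp: successively_Cons)
  qed (use Cons in auto)
qed auto

lemma foldr_red_succ: "successively (\<noteq>) z \<Longrightarrow> successively (\<noteq>) (foldr cons_red x z)"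
  by (induction x) (auto intro: cons_red_succ)

lemma foldr_red_set: "set (foldr cons_red x z) \<subseteq> set x \<union> set z"
  by (induction x) (use cons_red_set in fastforce)+

lemma red_succ: "successively (\<noteq>) (red x)"
  unfolding red_def by (rule foldr_red_succ) simp

lemma red_set: "set (red x) \<subseteq> set x"
  unfolding red_def using foldr_red_set[of x "[]"] by simp

lemma red_Cons: "red (a # x) = cons_red a (red x)"
  by (simp add: red_def)

lemma red_of_succ: "successively (\<noteq>) z \<Longrightarrow> red z = z"
proof (induction z)
  case (Cons a z)
  then show ?case by (cases z) (auto simp: red_Cons successively_Cons)
qed (simp add: red_def)

lemma foldr_cons_red_cons: "successively (\<noteq>) z \<Longrightarrow> successively (\<noteq>) w \<Longrightarrow>
   foldr cons_red (cons_red a w) z = cons_red a (foldr cons_red w z)"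
proof (cases w)
  case (Cons b ys)
  assume "successively (\<noteq>) z"
  then have "successively (\<noteq>) (foldr cons_red ys z)" by (rule foldr_red_succ)
  then show ?thesis using Cons cons_red_invol by auto
qed auto

lemma foldr_red: "successively (\<noteq>) z \<Longrightarrow> foldr cons_red (red x) z = foldr cons_red x z"
proof (induction x)
  case Nil
  then show ?case by (simp add: red_def)
next
  case (Cons a x)
  then show ?case by (simp add: red_Cons foldr_cons_red_cons red_succ)
qed

lemma red_append: "red (x @ y) = foldr cons_red x (red y)"
  by (simp add: red_def)

lemma red_mult: "foldr cons_red (red x) (red y) = red (x @ y)"
  by (simp add: foldr_red red_succ red_append)

lemma cancel_aux: "successively (\<noteq>) z \<Longrightarrow> foldr cons_red (x @ rev x) z = z"
proof (induction x arbitrary: z)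
  case (Cons a x)
  have "foldr cons_red ((a # x) @ rev (a # x)) z = cons_red a (foldr cons_red (x @ rev x) (cons_red a z))"
    by simp
  also have "\<dots> = cons_red a (cons_red a z)" using Cons cons_red_succ by metis
  also have "\<dots> = z" using Cons cons_red_invol by metis
  finally show ?case .
qed simp

lemma red_cancel: "red (x @ rev x) = []"
  unfolding red_def using cancel_aux[of "[]" x] by simp

lemma cons_red_map: "inj \<sigma> \<Longrightarrow> cons_red (\<sigma> a) (map \<sigma> ys) = map \<sigma> (cons_red a ys)"
  by (cases ys) (auto dest: injD)

lemma red_map: "inj \<sigma> \<Longrightarrow> red (map \<sigma> x) = map \<sigma> (red x)"
  by (induction x) (auto simp: red_Cons cons_red_map red_def)

lemma red_carrier: "set x \<subseteq> {1..n} \<Longrightarrow> red x \<in> carrier (Z2free n)"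
  using red_succ[of x] red_set[of x] by (auto simp: Z2free_def)

lemma Z2_mult: "x \<otimes>\<^bsub>Z2free n\<^esub> y = foldr cons_red x y"
  by (simp add: Z2free_def)

lemma Z2_red_mult: "red x \<otimes>\<^bsub>Z2free n\<^esub> red y = red (x @ y)"
  by (simp add: Z2_mult red_mult)

lemma Z2_inv: assumes "group (Z2free n)" "set x \<subseteq> {1..n}"
  shows "inv\<^bsub>Z2free n\<^esub> (red x) = red (rev x)"
proof -
  have "red (rev x) \<otimes>\<^bsub>Z2free n\<^esub> red x = \<one>\<^bsub>Z2free n\<^esub>"
    using Z2_red_mult red_cancel[of "rev x"] by (simp add: Z2free_def)
  then show ?thesis using assms red_carrier
    by (metis group.inv_equality set_rev)
qed

lemma coset_eq:
  assumes N: "normal A (Z2free n)" and c: "set c \<subseteq> {1..n}" and d: "set d \<subseteq> {1..n}"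
  shows "(A #>\<^bsub>Z2free n\<^esub> red c = A #>\<^bsub>Z2free n\<^esub> red d) \<longleftrightarrow> red (c @ rev d) \<in> A"
proof -
  interpret normal A "Z2free n" by (rule N)
  have G: "group (Z2free n)" by (rule is_group)
  have cc: "red c \<in> carrier (Z2free n)" and dd: "red d \<in> carrier (Z2free n)"
    using c d red_carrier by auto
  have "(A #>\<^bsub>Z2free n\<^esub> red c = A #>\<^bsub>Z2free n\<^esub> red d) \<longleftrightarrow> red c \<in> A #>\<^bsub>Z2free n\<^esub> red d"
    using repr_independence[OF _ dd is_subgroup] repr_independenceD[OF is_subgroup cc] by blast
  also have "\<dots> \<longleftrightarrow> red c \<otimes>\<^bsub>Z2free n\<^esub> inv\<^bsub>Z2free n\<^esub> red d \<in> A"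
    using rcos_module[OF G dd cc] .
  also have "red c \<otimes>\<^bsub>Z2free n\<^esub> inv\<^bsub>Z2free n\<^esub> red d = red (c @ rev d)"
    using Z2_inv[OF G d] Z2_red_mult by simp
  finally show ?thesis .
qed

lemma utens_formula:
  assumes N: "normal A (Z2free n)"
  shows "length is = length js \<Longrightarrow> set is \<subseteq> {1..n} \<Longrightarrow> x \<in> carrier (Gam n A) \<Longrightarrow>
    utens n A is js \<sigma> x = (if map \<sigma> js = is \<and> x = A #>\<^bsub>Z2free n\<^esub> red is then 1 else 0)"
proof (induction "is" arbitrary: js x)
  case Nil
  interpret normal A "Z2free n" by (rule N)
  have "A #>\<^bsub>Z2free n\<^esub> [] = A"
  proof -
    have "[] = \<one>\<^bsub>Z2free n\<^esub>" by (simp add: Z2free_def)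
    then show ?thesis using rcos_const[OF is_group subgroup.one_closed[OF is_subgroup]] by simp
  qed
  then show ?case using Nil by (simp add: utens_def aone_def Gam_def red_def)
next
  case (Cons i "is")
  interpret normal A "Z2free n" by (rule N)
  interpret Q: group "Gam n A" unfolding Gam_def by (rule factorgroup_is_group)
  obtain j js' where js: "js = j # js'" using Cons.prems by (cases js) auto
  have len: "length is = length js'" using Cons.prems js by simp
  have isn: "set is \<subseteq> {1..n}" and i1: "i \<in> {1..n}" using Cons.prems by auto
  have ic: "[i] \<in> carrier (Z2free n)" using i1 by (simp add: Z2free_def)
  have ric: "red is \<in> carrier (Z2free n)" using red_carrier[OF isn] .
  define g where "g = gam n A i"
  have gc: "g \<in> carrier (Gam n A)" unfolding g_def gam_def Gam_def
    using rcosetsI[OF subset ic] by (simp add: FactGroup_def)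
  have Cc: "A #>\<^bsub>Z2free n\<^esub> red is \<in> carrier (Gam n A)" unfolding Gam_def
    using rcosetsI[OF subset ric] by (simp add: FactGroup_def)
  have prod: "g \<otimes>\<^bsub>Gam n A\<^esub> (A #>\<^bsub>Z2free n\<^esub> red is) = A #>\<^bsub>Z2free n\<^esub> red (i # is)"
  proof -
    have "g \<otimes>\<^bsub>Gam n A\<^esub> (A #>\<^bsub>Z2free n\<^esub> red is) = A #>\<^bsub>Z2free n\<^esub> ([i] \<otimes>\<^bsub>Z2free n\<^esub> red is)"
      unfolding g_def gam_def Gam_def using rcos_sum[OF ic ric] by simp
    also have "[i] \<otimes>\<^bsub>Z2free n\<^esub> red is = red (i # is)" by (simp add: Z2_mult red_Cons)
    finally show ?thesis .
  qed
  have step: "utens n A (i # is) js \<sigma> x = conv (Gam n A) (uu n A i j \<sigma>) (utens n A is js' \<sigma>) x"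
    by (simp add: utens_def js amul_def)
  show ?case
  proof (cases "i = \<sigma> j")
    case False
    then show ?thesis unfolding step conv_def by (simp add: uu_def js)
  next
    case True
    have set1: "{y \<in> carrier (Gam n A). uu n A i j \<sigma> y \<noteq> 0} = {g}"
      using True gc by (auto simp: uu_def g_def)
    have "utens n A (i # is) js \<sigma> x = utens n A is js' \<sigma> (inv\<^bsub>Gam n A\<^esub> g \<otimes>\<^bsub>Gam n A\<^esub> x)"
      unfolding step conv_def set1 using True by (simp add: uu_def g_def)
    also have "\<dots> = (if map \<sigma> js' = is \<and> inv\<^bsub>Gam n A\<^esub> g \<otimes>\<^bsub>Gam n A\<^esub> x = A #>\<^bsub>Z2free n\<^esub> red is then 1 else 0)"
      using Cons.IH[OF len isn] gc Cons.prems(3) by simp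
    also have "(inv\<^bsub>Gam n A\<^esub> g \<otimes>\<^bsub>Gam n A\<^esub> x = A #>\<^bsub>Z2free n\<^esub> red is) \<longleftrightarrow> x = A #>\<^bsub>Z2free n\<^esub> red (i # is)"
      using Q.inv_solve_left[OF Cc gc Cons.prems(3)] prod by metis
    finally show ?thesis using True js by auto
  qed
qed

lemma H_perm: "subgroup H (sym_group n) \<Longrightarrow> \<sigma> \<in> H \<Longrightarrow> \<sigma> permutes {1..n}"
  using subgroup.subset sym_group_carrier by blast

lemma H_id: "subgroup H (sym_group n) \<Longrightarrow> id \<in> H"
  using subgroup.one_closed sym_group_one by metis

lemma H_comp: "subgroup H (sym_group n) \<Longrightarrow> \<sigma> \<in> H \<Longrightarrow> \<tau> \<in> H \<Longrightarrow> \<sigma> \<circ> \<tau> \<in> H"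
  using subgroup.m_closed sym_group_mult by metis

lemma H_inv: assumes "subgroup H (sym_group n)" "\<sigma> \<in> H"
  shows "\<exists>\<sigma>'\<in>H. \<sigma>' \<circ> \<sigma> = id \<and> \<sigma> \<circ> \<sigma>' = id"
proof -
  interpret G: group "sym_group n" by (rule sym_group_is_group)
  have c: "\<sigma> \<in> carrier (sym_group n)" using assms subgroup.subset by blast
  show ?thesis
    using subgroup.m_inv_closed[OF assms] G.l_inv[OF c] G.r_inv[OF c]
    by (auto simp: sym_group_mult sym_group_one)
qed

lemma H_fin: "subgroup H (sym_group n) \<Longrightarrow> finite H"
proof -
  assume "subgroup H (sym_group n)"
  then have "H \<subseteq> {p. p permutes {1..n}}" using subgroup.subset sym_group_carrier by blast
  then show ?thesis using finite_permutations[of "{1..n}"] finite_subset by auto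
qed

lemma idx_fin: "finite (idx n k)"
proof -
  have "idx n k \<subseteq> {c. set c \<subseteq> {1..n} \<and> length c = k}" by (auto simp: idx_def)
  then show ?thesis using finite_lists_length_eq[of "{1..n}" k] finite_subset by auto
qed

lemma idx_map: assumes "subgroup H (sym_group n)" "\<sigma> \<in> H"
  shows "map \<sigma> c \<in> idx n k \<longleftrightarrow> c \<in> idx n k"
  using permutes_in_image[OF H_perm[OF assms]] by (auto simp: idx_def)

lemma H_inj: "subgroup H (sym_group n) \<Longrightarrow> \<sigma> \<in> H \<Longrightarrow> inj \<sigma>"
  using H_perm permutes_inj by blast

lemma good_map: assumes "subgroup H (sym_group n)" "\<sigma> \<in> H" "\<forall>\<sigma>\<in>H. map \<sigma> ` A = A"
  shows "red (map \<sigma> a @ rev (map \<sigma> b)) \<in> A \<longleftrightarrow> red (a @ rev b) \<in> A"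
proof -
  have inj: "inj \<sigma>" using H_inj assms by blast
  then have injm: "inj (map \<sigma>)" by (simp add: inj_mapI)
  have e: "red (map \<sigma> a @ rev (map \<sigma> b)) = map \<sigma> (red (a @ rev b))"
    using red_map[OF inj, of "a @ rev b"] by (simp add: rev_map)
  have A: "map \<sigma> ` A = A" using assms by blast
  show ?thesis unfolding e
    by (metis A image_eqI inj_image_mem_iff injm)
qed

definition PT where "PT n H A k l T \<longleftrightarrow> T \<in> linmaps n k l \<and>
  (\<forall>i\<in>idx n k. \<forall>j\<in>idx n l. red (i @ rev j) \<notin> A \<longrightarrow> T j i = 0) \<and>
  (\<forall>\<sigma>\<in>H. \<forall>i\<in>idx n k. \<forall>j\<in>idx n l. T (map \<sigma> j) (map \<sigma> i) = T j i)"

lemma rc_carrier: "normal A (Z2free n) \<Longrightarrow> set c \<subseteq> {1..n} \<Longrightarrow> A #>\<^bsub>Z2free n\<^esub> red c \<in> carrier (Gam n A)"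
  unfolding Gam_def using group.rcosetsI[OF normal.axioms(2) subgroup.subset[OF normal_imp_subgroup] red_carrier]
  by (simp add: FactGroup_def)

lemma sums_eval:
  assumes HS: "subgroup H (sym_group n)" and N: "normal A (Z2free n)" and s: "\<sigma> \<in> H"
    and i: "i \<in> idx n k" and j: "j \<in> idx n l" and x: "x \<in> carrier (Gam n A)"
  shows "(\<Sum>c\<in>idx n k. T (map \<sigma> j) c * utens n A c i \<sigma> x) =
           T (map \<sigma> j) (map \<sigma> i) * (if x = A #>\<^bsub>Z2free n\<^esub> red (map \<sigma> i) then 1 else 0)"
    and "(\<Sum>d\<in>idx n l. utens n A (map \<sigma> j) d \<sigma> x * T d i) =
           (if x = A #>\<^bsub>Z2free n\<^esub> red (map \<sigma> j) then 1 else 0) * T j i"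
proof -
  have si: "map \<sigma> i \<in> idx n k" using idx_map[OF HS s] i by blast
  have sj: "map \<sigma> j \<in> idx n l" using idx_map[OF HS s] j by blast
  have "(\<Sum>c\<in>idx n k. T (map \<sigma> j) c * utens n A c i \<sigma> x) =
        (\<Sum>c\<in>idx n k. if c = map \<sigma> i then T (map \<sigma> j) (map \<sigma> i) * (if x = A #>\<^bsub>Z2free n\<^esub> red (map \<sigma> i) then 1 else 0) else 0)"
  proof (rule sum.cong[OF refl])
    fix c assume c: "c \<in> idx n k"
    have "utens n A c i \<sigma> x = (if map \<sigma> i = c \<and> x = A #>\<^bsub>Z2free n\<^esub> red c then 1 else 0)"
      using utens_formula[OF N] c i x by (auto simp: idx_def)
    then show "T (map \<sigma> j) c * utens n A c i \<sigma> x = (if c = map \<sigma> i then T (map \<sigma> j) (map \<sigma> i) * (if x = A #>\<^bsub>Z2free n\<^esub> red (map \<sigma> i) then 1 else 0) else 0)"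
      by auto
  qed
  also have "\<dots> = T (map \<sigma> j) (map \<sigma> i) * (if x = A #>\<^bsub>Z2free n\<^esub> red (map \<sigma> i) then 1 else 0)"
    using si idx_fin by (simp add: sum.delta')
  finally show "(\<Sum>c\<in>idx n k. T (map \<sigma> j) c * utens n A c i \<sigma> x) =
           T (map \<sigma> j) (map \<sigma> i) * (if x = A #>\<^bsub>Z2free n\<^esub> red (map \<sigma> i) then 1 else 0)" .
  have inj: "inj (map \<sigma>)" using H_inj[OF HS s] by (simp add: inj_mapI)
  have "(\<Sum>d\<in>idx n l. utens n A (map \<sigma> j) d \<sigma> x * T d i) =
        (\<Sum>d\<in>idx n l. if d = j then (if x = A #>\<^bsub>Z2free n\<^esub> red (map \<sigma> j) then 1 else 0) * T j i else 0)"
  proof (rule sum.cong[OF refl])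
    fix d assume d: "d \<in> idx n l"
    have "utens n A (map \<sigma> j) d \<sigma> x = (if map \<sigma> d = map \<sigma> j \<and> x = A #>\<^bsub>Z2free n\<^esub> red (map \<sigma> j) then 1 else 0)"
      using utens_formula[OF N] d sj x by (auto simp: idx_def)
    also have "map \<sigma> d = map \<sigma> j \<longleftrightarrow> d = j" using inj by (auto dest: injD)
    finally show "utens n A (map \<sigma> j) d \<sigma> x * T d i = (if d = j then (if x = A #>\<^bsub>Z2free n\<^esub> red (map \<sigma> j) then 1 else 0) * T j i else 0)"
      by auto
  qed
  also have "\<dots> = (if x = A #>\<^bsub>Z2free n\<^esub> red (map \<sigma> j) then 1 else 0) * T j i"
    using j idx_fin by (simp add: sum.delta')
  finally show "(\<Sum>d\<in>idx n l. utens n A (map \<sigma> j) d \<sigma> x * T d i) =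
           (if x = A #>\<^bsub>Z2free n\<^esub> red (map \<sigma> j) then 1 else 0) * T j i" .
qed

lemma pointwise_iff:
  assumes "C1 \<in> X" "C2 \<in> X"
  shows "(\<forall>x\<in>X. (a::complex) * (if x = C1 then 1 else 0) = (if x = C2 then 1 else 0) * b) \<longleftrightarrow>
         (if C1 = C2 then a = b else a = 0 \<and> b = 0)"
proof (cases "C1 = C2")
  case True then show ?thesis using assms by auto
next
  case False
  show ?thesis
  proof
    assume h: "\<forall>x\<in>X. a * (if x = C1 then 1 else 0) = (if x = C2 then 1 else 0) * b"
    have "a = 0" using h[rule_format, OF assms(1)] False by simp
    moreover have "b = 0" using h[rule_format, OF assms(2)] False by simp
    ultimately show "if C1 = C2 then a = b else a = 0 \<and> b = 0" using False by simp
  qed (use False in auto)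
qed

lemma Mor_char:
  assumes HS: "subgroup H (sym_group n)" and N: "normal A (Z2free n)" and AI: "\<forall>\<sigma>\<in>H. map \<sigma> ` A = A"
  shows "Mor n H A k l = {T. PT n H A k l T}"
proof -
  let ?Q = "\<lambda>T. \<forall>\<sigma>\<in>H. \<forall>i\<in>idx n k. \<forall>j\<in>idx n l.
     (if red (i @ rev j) \<in> A then T (map \<sigma> j) (map \<sigma> i) = T j i else T (map \<sigma> j) (map \<sigma> i) = 0 \<and> T j i = 0)"
  have key: "T \<in> Mor n H A k l \<longleftrightarrow> T \<in> linmaps n k l \<and> ?Q T" for T
  proof -
    have step1: "(\<forall>j\<in>idx n l. \<forall>i\<in>idx n k. \<forall>\<sigma>\<in>H. \<forall>x\<in>carrier (Gam n A).
      (\<Sum>c\<in>idx n k. T j c * utens n A c i \<sigma> x) = (\<Sum>d\<in>idx n l. utens n A j d \<sigma> x * T d i))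
      \<longleftrightarrow> (\<forall>\<sigma>\<in>H. \<forall>i\<in>idx n k. \<forall>j\<in>idx n l. \<forall>x\<in>carrier (Gam n A).
      (\<Sum>c\<in>idx n k. T (map \<sigma> j) c * utens n A c i \<sigma> x) = (\<Sum>d\<in>idx n l. utens n A (map \<sigma> j) d \<sigma> x * T d i))"
    proof
      assume h: "\<forall>j\<in>idx n l. \<forall>i\<in>idx n k. \<forall>\<sigma>\<in>H. \<forall>x\<in>carrier (Gam n A).
      (\<Sum>c\<in>idx n k. T j c * utens n A c i \<sigma> x) = (\<Sum>d\<in>idx n l. utens n A j d \<sigma> x * T d i)"
      show "\<forall>\<sigma>\<in>H. \<forall>i\<in>idx n k. \<forall>j\<in>idx n l. \<forall>x\<in>carrier (Gam n A).
      (\<Sum>c\<in>idx n k. T (map \<sigma> j) c * utens n A c i \<sigma> x) = (\<Sum>d\<in>idx n l. utens n A (map \<sigma> j) d \<sigma> x * T d i)"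
        using h idx_map[OF HS] by blast
    next
      assume h: "\<forall>\<sigma>\<in>H. \<forall>i\<in>idx n k. \<forall>j\<in>idx n l. \<forall>x\<in>carrier (Gam n A).
      (\<Sum>c\<in>idx n k. T (map \<sigma> j) c * utens n A c i \<sigma> x) = (\<Sum>d\<in>idx n l. utens n A (map \<sigma> j) d \<sigma> x * T d i)"
      show "\<forall>j\<in>idx n l. \<forall>i\<in>idx n k. \<forall>\<sigma>\<in>H. \<forall>x\<in>carrier (Gam n A).
      (\<Sum>c\<in>idx n k. T j c * utens n A c i \<sigma> x) = (\<Sum>d\<in>idx n l. utens n A j d \<sigma> x * T d i)"
      proof (intro ballI)
        fix j i \<sigma> x assume j: "j \<in> idx n l" and i: "i \<in> idx n k" and s: "\<sigma> \<in> H" and x: "x \<in> carrier (Gam n A)"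
        obtain \<sigma>' where s': "\<sigma>' \<in> H" "\<sigma> \<circ> \<sigma>' = id" using H_inv[OF HS s] by blast
        have jj: "map \<sigma> (map \<sigma>' j) = j" using s' by (simp add: map_idI pointfree_idE)
        have j': "map \<sigma>' j \<in> idx n l" using idx_map[OF HS s'(1)] j by blast
        show "(\<Sum>c\<in>idx n k. T j c * utens n A c i \<sigma> x) = (\<Sum>d\<in>idx n l. utens n A j d \<sigma> x * T d i)"
          using h[rule_format, OF s i j' x] jj by simp
      qed
    qed
    have step2: "(\<forall>x\<in>carrier (Gam n A).
      (\<Sum>c\<in>idx n k. T (map \<sigma> j) c * utens n A c i \<sigma> x) = (\<Sum>d\<in>idx n l. utens n A (map \<sigma> j) d \<sigma> x * T d i))
      \<longleftrightarrow> (if red (i @ rev j) \<in> A then T (map \<sigma> j) (map \<sigma> i) = T j i else T (map \<sigma> j) (map \<sigma> i) = 0 \<and> T j i = 0)"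
      if s: "\<sigma> \<in> H" and i: "i \<in> idx n k" and j: "j \<in> idx n l" for \<sigma> i j
    proof -
      have "map \<sigma> i \<in> idx n k" "map \<sigma> j \<in> idx n l" using idx_map[OF HS s] i j by blast+
      then have si: "set (map \<sigma> i) \<subseteq> {1..n}" and sj: "set (map \<sigma> j) \<subseteq> {1..n}"
        unfolding idx_def by blast+
      have eq: "(A #>\<^bsub>Z2free n\<^esub> red (map \<sigma> i) = A #>\<^bsub>Z2free n\<^esub> red (map \<sigma> j)) \<longleftrightarrow> red (i @ rev j) \<in> A"
        using coset_eq[OF N si sj] good_map[OF HS s AI] by simp
      show ?thesis
        using sums_eval[OF HS N s i j, of _ T] pointwise_iff[OF rc_carrier[OF N si] rc_carrier[OF N sj]] eq
        by simp
    qed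
    show ?thesis unfolding Mor_def using step1 step2 by simp
  qed
  have key2: "T \<in> linmaps n k l \<and> ?Q T \<longleftrightarrow> PT n H A k l T" for T
  proof
    assume h: "T \<in> linmaps n k l \<and> ?Q T"
    have sup: "\<forall>i\<in>idx n k. \<forall>j\<in>idx n l. red (i @ rev j) \<notin> A \<longrightarrow> T j i = 0"
      using h H_id[OF HS] by fastforce
    have "\<forall>\<sigma>\<in>H. \<forall>i\<in>idx n k. \<forall>j\<in>idx n l. T (map \<sigma> j) (map \<sigma> i) = T j i"
      using h by (metis (full_types))
    then show "PT n H A k l T" unfolding PT_def using h sup by simp
  next
    assume h: "PT n H A k l T"
    show "T \<in> linmaps n k l \<and> ?Q T"
    proof (intro conjI ballI)
      show "T \<in> linmaps n k l" using h by (simp add: PT_def)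
      fix \<sigma> i j assume s: "\<sigma> \<in> H" and i: "i \<in> idx n k" and j: "j \<in> idx n l"
      have si: "map \<sigma> i \<in> idx n k" and sj: "map \<sigma> j \<in> idx n l" using idx_map[OF HS s] i j by auto
      show "if red (i @ rev j) \<in> A then T (map \<sigma> j) (map \<sigma> i) = T j i else T (map \<sigma> j) (map \<sigma> i) = 0 \<and> T j i = 0"
        using h[unfolded PT_def] s i j si sj good_map[OF HS s AI, of i j] by auto
    qed
  qed
  show ?thesis using key key2 by blast
qed

lemma card_eq_shift:
  assumes "bij_betw f X Y" shows "card X = card Y"
  using assms bij_betw_same_card by blast

lemma That_shift_out:
  assumes HS: "subgroup H (sym_group n)" and s: "\<sigma> \<in> H"
  shows "That H a b (map \<sigma> j) (map \<sigma> i) = That H a b j i"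
proof -
  obtain \<sigma>' where s': "\<sigma>' \<in> H" "\<sigma>' \<circ> \<sigma> = id" "\<sigma> \<circ> \<sigma>' = id" using H_inv[OF HS s] by blast
  have "bij_betw (\<lambda>\<psi>. \<sigma>' \<circ> \<psi>) {\<phi>\<in>H. map \<phi> a = map \<sigma> i \<and> map \<phi> b = map \<sigma> j} {\<phi>\<in>H. map \<phi> a = i \<and> map \<phi> b = j}"
  proof (rule bij_betw_byWitness[where f' = "\<lambda>\<psi>. \<sigma> \<circ> \<psi>"])
    show "\<forall>x\<in>{\<phi> \<in> H. map \<phi> a = map \<sigma> i \<and> map \<phi> b = map \<sigma> j}. \<sigma> \<circ> (\<sigma>' \<circ> x) = x"
      using s' by (simp add: comp_assoc[symmetric])
    show "\<forall>y\<in>{\<phi> \<in> H. map \<phi> a = i \<and> map \<phi> b = j}. \<sigma>' \<circ> (\<sigma> \<circ> y) = y"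
      using s' by (simp add: comp_assoc[symmetric])
    show "(\<circ>) \<sigma>' ` {\<phi> \<in> H. map \<phi> a = map \<sigma> i \<and> map \<phi> b = map \<sigma> j} \<subseteq> {\<phi> \<in> H. map \<phi> a = i \<and> map \<phi> b = j}"
    proof
      fix y assume "y \<in> (\<circ>) \<sigma>' ` {\<phi> \<in> H. map \<phi> a = map \<sigma> i \<and> map \<phi> b = map \<sigma> j}"
      then obtain \<phi> where y: "y = \<sigma>' \<circ> \<phi>" "\<phi> \<in> H" "map \<phi> a = map \<sigma> i" "map \<phi> b = map \<sigma> j" by blast
      have "map y a = map (\<sigma>' \<circ> \<sigma>) i" "map y b = map (\<sigma>' \<circ> \<sigma>) j"
        using y by (simp_all flip: map_map)
      then show "y \<in> {\<phi> \<in> H. map \<phi> a = i \<and> map \<phi> b = j}" using y H_comp[OF HS s'(1)] s' by simp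
    qed
    show "(\<circ>) \<sigma> ` {\<phi> \<in> H. map \<phi> a = i \<and> map \<phi> b = j} \<subseteq> {\<phi> \<in> H. map \<phi> a = map \<sigma> i \<and> map \<phi> b = map \<sigma> j}"
      using H_comp[OF HS s] by (auto simp flip: map_map)
  qed
  then have "card {\<phi>\<in>H. map \<phi> a = map \<sigma> i \<and> map \<phi> b = map \<sigma> j} = card {\<phi>\<in>H. map \<phi> a = i \<and> map \<phi> b = j}"
    by (rule bij_betw_same_card)
  then show ?thesis unfolding That_def by simp
qed

lemma That_shift_in:
  assumes HS: "subgroup H (sym_group n)" and s: "\<sigma> \<in> H"
  shows "That H (map \<sigma> a) (map \<sigma> b) = That H a b"
proof (intro ext)
  fix j i
  obtain \<sigma>' where s': "\<sigma>' \<in> H" "\<sigma>' \<circ> \<sigma> = id" "\<sigma> \<circ> \<sigma>' = id" using H_inv[OF HS s] by blast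
  have "bij_betw (\<lambda>\<psi>. \<psi> \<circ> \<sigma>) {\<phi>\<in>H. map \<phi> (map \<sigma> a) = i \<and> map \<phi> (map \<sigma> b) = j} {\<phi>\<in>H. map \<phi> a = i \<and> map \<phi> b = j}"
  proof (rule bij_betw_byWitness[where f' = "\<lambda>\<psi>. \<psi> \<circ> \<sigma>'"])
    show "\<forall>x\<in>{\<phi> \<in> H. map \<phi> (map \<sigma> a) = i \<and> map \<phi> (map \<sigma> b) = j}. x \<circ> \<sigma> \<circ> \<sigma>' = x"
      using s' by (simp add: comp_assoc)
    show "\<forall>y\<in>{\<phi> \<in> H. map \<phi> a = i \<and> map \<phi> b = j}. y \<circ> \<sigma>' \<circ> \<sigma> = y"
      using s' by (simp add: comp_assoc)
    show "(\<lambda>\<psi>. \<psi> \<circ> \<sigma>) ` {\<phi> \<in> H. map \<phi> (map \<sigma> a) = i \<and> map \<phi> (map \<sigma> b) = j} \<subseteq> {\<phi> \<in> H. map \<phi> a = i \<and> map \<phi> b = j}"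
      using H_comp[OF HS _ s] by auto
    show "(\<lambda>\<psi>. \<psi> \<circ> \<sigma>') ` {\<phi> \<in> H. map \<phi> a = i \<and> map \<phi> b = j} \<subseteq> {\<phi> \<in> H. map \<phi> (map \<sigma> a) = i \<and> map \<phi> (map \<sigma> b) = j}"
    proof
      fix y assume "y \<in> (\<lambda>\<psi>. \<psi> \<circ> \<sigma>') ` {\<phi> \<in> H. map \<phi> a = i \<and> map \<phi> b = j}"
      then obtain \<phi> where y: "y = \<phi> \<circ> \<sigma>'" "\<phi> \<in> H" "map \<phi> a = i" "map \<phi> b = j" by blast
      have "map y (map \<sigma> a) = map (\<phi> \<circ> (\<sigma>' \<circ> \<sigma>)) a" "map y (map \<sigma> b) = map (\<phi> \<circ> (\<sigma>' \<circ> \<sigma>)) b"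
        using y by (simp_all add: comp_assoc)
      then show "y \<in> {\<phi> \<in> H. map \<phi> (map \<sigma> a) = i \<and> map \<phi> (map \<sigma> b) = j}"
        using y H_comp[OF HS y(2) s'(1)] s' by simp
    qed
  qed
  then have "card {\<phi>\<in>H. map \<phi> (map \<sigma> a) = i \<and> map \<phi> (map \<sigma> b) = j} = card {\<phi>\<in>H. map \<phi> a = i \<and> map \<phi> b = j}"
    by (rule bij_betw_same_card)
  then show "That H (map \<sigma> a) (map \<sigma> b) j i = That H a b j i" unfolding That_def by simp
qed

lemma That_nz: "That H a b j i \<noteq> 0 \<Longrightarrow> \<exists>\<phi>\<in>H. map \<phi> a = i \<and> map \<phi> b = j"
proof -
  assume "That H a b j i \<noteq> 0"
  then have "card {\<phi>\<in>H. map \<phi> a = i \<and> map \<phi> b = j} \<noteq> 0" unfolding That_def by auto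
  then have "{\<phi>\<in>H. map \<phi> a = i \<and> map \<phi> b = j} \<noteq> {}" by (metis card.empty)
  then show ?thesis by blast
qed

lemma That_pos: assumes HS: "subgroup H (sym_group n)" shows "That H a b b a \<noteq> 0"
proof -
  have "id \<in> {\<phi>\<in>H. map \<phi> a = a \<and> map \<phi> b = b}" using H_id[OF HS] by simp
  moreover have "finite {\<phi>\<in>H. map \<phi> a = a \<and> map \<phi> b = b}" using H_fin[OF HS] by simp
  ultimately have "card {\<phi>\<in>H. map \<phi> a = a \<and> map \<phi> b = b} \<noteq> 0" by (simp add: card_eq_0_iff; blast)
  then show ?thesis unfolding That_def by simp
qed

lemma PT_That:
  assumes HS: "subgroup H (sym_group n)" and AI: "\<forall>\<sigma>\<in>H. map \<sigma> ` A = A"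
    and a: "a \<in> idx n k" and b: "b \<in> idx n l" and g: "red (a @ rev b) \<in> A"
  shows "PT n H A k l (That H a b)"
  unfolding PT_def
proof (intro conjI ballI impI)
  show "That H a b \<in> linmaps n k l" unfolding linmaps_def
  proof (intro CollectI allI impI)
    fix j i assume h: "j \<notin> idx n l \<or> i \<notin> idx n k"
    show "That H a b j i = 0"
    proof (rule ccontr)
      assume "That H a b j i \<noteq> 0"
      then obtain \<phi> where "\<phi> \<in> H" "map \<phi> a = i" "map \<phi> b = j" using That_nz by blast
      then show False using h idx_map[OF HS] a b by blast
    qed
  qed
next
    fix i j assume i: "i \<in> idx n k" and j: "j \<in> idx n l" and ng: "red (i @ rev j) \<notin> A"
    show "That H a b j i = 0"
    proof (rule ccontr)
      assume "That H a b j i \<noteq> 0"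
      then obtain \<phi> where "\<phi> \<in> H" "map \<phi> a = i" "map \<phi> b = j" using That_nz by blast
      then show False using ng g good_map[OF HS _ AI] by blast
    qed
  next
    fix \<sigma> i j assume "\<sigma> \<in> H" "i \<in> idx n k" "j \<in> idx n l"
    then show "That H a b (map \<sigma> j) (map \<sigma> i) = That H a b j i" using That_shift_out[OF HS] by blast
qed

lemma PT_comb:
  assumes F: "\<forall>M\<in>F. PT n H A k l M"
  shows "PT n H A k l (\<lambda>j i. \<Sum>M\<in>F. c M * M j i)"
  unfolding PT_def
proof (intro conjI ballI impI)
  show "(\<lambda>j i. \<Sum>M\<in>F. c M * M j i) \<in> linmaps n k l" unfolding linmaps_def
  proof (intro CollectI allI impI)
    fix j i assume h: "j \<notin> idx n l \<or> i \<notin> idx n k"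
    have "\<forall>M\<in>F. M j i = 0" using F h unfolding PT_def linmaps_def by blast
    then show "(\<Sum>M\<in>F. c M * M j i) = 0" by (auto intro: sum.neutral)
  qed
next
  fix i j assume i: "i \<in> idx n k" and j: "j \<in> idx n l" and ng: "red (i @ rev j) \<notin> A"
  have "\<forall>M\<in>F. M j i = 0" using F i j ng unfolding PT_def by blast
  then show "(\<Sum>M\<in>F. c M * M j i) = 0" by (auto intro: sum.neutral)
next
  fix \<sigma> i j assume s: "\<sigma> \<in> H" and i: "i \<in> idx n k" and j: "j \<in> idx n l"
  have "\<forall>M\<in>F. M (map \<sigma> j) (map \<sigma> i) = M j i" using F s i j unfolding PT_def by blast
  then show "(\<Sum>M\<in>F. c M * M (map \<sigma> j) (map \<sigma> i)) = (\<Sum>M\<in>F. c M * M j i)" by (auto intro: sum.cong)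
qed

lemma PT_D1: "PT n H A k l T \<Longrightarrow> \<not> (i \<in> idx n k \<and> j \<in> idx n l) \<Longrightarrow> T j i = 0"
  unfolding PT_def linmaps_def by blast
lemma PT_D2: "PT n H A k l T \<Longrightarrow> i \<in> idx n k \<Longrightarrow> j \<in> idx n l \<Longrightarrow> red (i @ rev j) \<notin> A \<Longrightarrow> T j i = 0"
  unfolding PT_def by blast
lemma PT_D3: "PT n H A k l T \<Longrightarrow> \<sigma> \<in> H \<Longrightarrow> i \<in> idx n k \<Longrightarrow> j \<in> idx n l \<Longrightarrow> T (map \<sigma> j) (map \<sigma> i) = T j i"
  unfolding PT_def by blast

lemma PT_span:
  assumes HS: "subgroup H (sym_group n)" and AI: "\<forall>\<sigma>\<in>H. map \<sigma> ` A = A"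
  shows "{T. PT n H A k l T} = cspan {That H a b | a b. a \<in> idx n k \<and> b \<in> idx n l \<and> red (a @ rev b) \<in> A}"
    (is "_ = cspan ?S")
proof (intro equalityI subsetI)
  fix T assume "T \<in> {T. PT n H A k l T}"
  then have PTT: "PT n H A k l T" by simp
  have finS: "finite ?S"
  proof -
    have "?S \<subseteq> (\<lambda>p. That H (fst p) (snd p)) ` (idx n k \<times> idx n l)"
    proof
      fix M assume "M \<in> ?S"
      then obtain a b where "M = That H a b" "a \<in> idx n k" "b \<in> idx n l" by blast
      then show "M \<in> (\<lambda>p. That H (fst p) (snd p)) ` (idx n k \<times> idx n l)"
        by (intro image_eqI[of _ _ "(a, b)"]) auto
    qed
    then show ?thesis by (rule finite_subset) (intro finite_imageI finite_cartesian_product idx_fin)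
  qed
  define rep where "rep M = (SOME p. fst p \<in> idx n k \<and> snd p \<in> idx n l \<and> red (fst p @ rev (snd p)) \<in> A \<and> M = That H (fst p) (snd p))" for M
  define cf where "cf M = T (snd (rep M)) (fst (rep M)) / M (snd (rep M)) (fst (rep M))" for M
  have PTS: "\<forall>M\<in>?S. PT n H A k l M"
  proof
    fix M assume "M \<in> ?S"
    then obtain a b where "M = That H a b" "a \<in> idx n k" "b \<in> idx n l" "red (a @ rev b) \<in> A" by blast
    then show "PT n H A k l M" using PT_That[OF HS AI] by simp
  qed
  have Teq: "T = (\<lambda>j i. \<Sum>M\<in>?S. cf M * M j i)"
  proof (intro ext)
    fix j i
    show "T j i = (\<Sum>M\<in>?S. cf M * M j i)"
    proof (cases "i \<in> idx n k \<and> j \<in> idx n l \<and> red (i @ rev j) \<in> A")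
      case True
      then have i: "i \<in> idx n k" and j: "j \<in> idx n l" and g: "red (i @ rev j) \<in> A" by auto
      define M0 where "M0 = That H i j"
      have M0S: "M0 \<in> ?S" unfolding M0_def
        by (rule CollectI, intro exI[of _ i] exI[of _ j]) (use i j g in simp)
      have others: "\<forall>M\<in>?S - {M0}. cf M * M j i = 0"
      proof
        fix M assume M: "M \<in> ?S - {M0}"
        then obtain a b where M': "M = That H a b" by blast
        show "cf M * M j i = 0"
        proof (rule ccontr)
          assume "cf M * M j i \<noteq> 0"
          then have "That H a b j i \<noteq> 0" using M' by auto
          then obtain \<phi> where ph: "\<phi> \<in> H" "map \<phi> a = i" "map \<phi> b = j" using That_nz by blast
          have "That H (map \<phi> a) (map \<phi> b) = That H a b" using That_shift_in[OF HS ph(1)] .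
          then have "M0 = M" using ph M' M0_def by simp
          then show False using M by blast
        qed
      qed
      have "(\<Sum>M\<in>?S. cf M * M j i) = cf M0 * M0 j i + (\<Sum>M\<in>?S - {M0}. cf M * M j i)"
        by (rule sum.remove[OF finS M0S])
      also have "(\<Sum>M\<in>?S - {M0}. cf M * M j i) = 0" by (rule sum.neutral[OF others])
      finally have sumeq: "(\<Sum>M\<in>?S. cf M * M j i) = cf M0 * M0 j i" by simp
      have ex: "\<exists>p. fst p \<in> idx n k \<and> snd p \<in> idx n l \<and> red (fst p @ rev (snd p)) \<in> A \<and> M0 = That H (fst p) (snd p)"
        using True M0_def by (intro exI[of _ "(i, j)"]) simp
      have rp: "fst (rep M0) \<in> idx n k \<and> snd (rep M0) \<in> idx n l \<and> M0 = That H (fst (rep M0)) (snd (rep M0))"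
        using someI_ex[OF ex] unfolding rep_def by blast
      define a0 where "a0 = fst (rep M0)"
      define b0 where "b0 = snd (rep M0)"
      have "That H a0 b0 b0 a0 \<noteq> 0" using That_pos[OF HS] .
      then have "M0 b0 a0 \<noteq> 0" using rp a0_def b0_def by simp
      then have "That H i j b0 a0 \<noteq> 0" using M0_def by simp
      then obtain \<phi> where ph: "\<phi> \<in> H" "map \<phi> i = a0" "map \<phi> j = b0" using That_nz by blast
      have e1: "T b0 a0 = T j i" using PT_D3[OF PTT ph(1) i j] ph by simp
      have e2: "M0 b0 a0 = M0 j i" using That_shift_out[OF HS ph(1), of i j j i] ph M0_def by simp
      have nz: "M0 j i \<noteq> 0" using That_pos[OF HS] M0_def by simp
      have "cf M0 = T j i / M0 j i" unfolding cf_def using e1 e2 a0_def b0_def by simp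
      then show ?thesis using sumeq nz by simp
    next
      case False
      have zero: "M j i = 0" if P: "PT n H A k l M" for M
      proof (cases "i \<in> idx n k \<and> j \<in> idx n l")
        case True
        then have i: "i \<in> idx n k" and j: "j \<in> idx n l" by simp_all
        have "red (i @ rev j) \<notin> A" using False True by simp
        then show ?thesis using PT_D2[OF P i j] by simp
      next
        case F2: False
        then show ?thesis using PT_D1[OF P] by simp
      qed
      have Tz: "T j i = 0" using zero[OF PTT] .
      have "\<forall>M\<in>?S. cf M * M j i = 0"
      proof
        fix M assume "M \<in> ?S"
        then have P: "PT n H A k l M" by (rule bspec[OF PTS])
        show "cf M * M j i = 0" using zero[OF P] by simp
      qed
      then have "(\<Sum>M\<in>?S. cf M * M j i) = 0" by (rule sum.neutral)
      then show ?thesis using Tz by simp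
    qed
  qed
  show "T \<in> cspan ?S" unfolding cspan_def
    by (intro CollectI exI[of _ ?S] exI[of _ cf]) (use finS Teq in simp)
next
  fix T assume "T \<in> cspan ?S"
  then have "\<exists>F c. finite F \<and> F \<subseteq> ?S \<and> T = (\<lambda>j i. \<Sum>M\<in>F. c M * M j i)"
    unfolding cspan_def by (rule CollectD)
  then obtain F c where F: "F \<subseteq> ?S" and T: "T = (\<lambda>j i. \<Sum>M\<in>F. c M * M j i)"
    by (elim exE conjE)
  have "\<forall>M\<in>F. PT n H A k l M"
  proof
    fix M assume "M \<in> F"
    then have "M \<in> ?S" using F by blast
    then obtain a b where "M = That H a b" "a \<in> idx n k" "b \<in> idx n l" "red (a @ rev b) \<in> A" by blast
    then show "PT n H A k l M" using PT_That[OF HS AI] by simp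
  qed
  then show "T \<in> {T. PT n H A k l T}" using PT_comb T by simp
qed

lemma orb_shift:
  assumes HS: "subgroup H (sym_group n)" and s: "\<phi> \<in> H"
  shows "{(map \<psi> (map \<phi> a), map \<psi> (map \<phi> b)) | \<psi>. \<psi> \<in> H} = {(map \<psi> a, map \<psi> b) | \<psi>. \<psi> \<in> H}"
proof (intro equalityI subsetI)
  fix p assume "p \<in> {(map \<psi> (map \<phi> a), map \<psi> (map \<phi> b)) | \<psi>. \<psi> \<in> H}"
  then obtain \<psi> where p: "p = (map \<psi> (map \<phi> a), map \<psi> (map \<phi> b))" "\<psi> \<in> H" by blast
  have "\<psi> \<circ> \<phi> \<in> H" using H_comp[OF HS p(2) s] .
  moreover have "p = (map (\<psi> \<circ> \<phi>) a, map (\<psi> \<circ> \<phi>) b)" using p by simp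
  ultimately show "p \<in> {(map \<psi> a, map \<psi> b) | \<psi>. \<psi> \<in> H}" by blast
next
  fix p assume "p \<in> {(map \<psi> a, map \<psi> b) | \<psi>. \<psi> \<in> H}"
  then obtain \<psi> where p: "p = (map \<psi> a, map \<psi> b)" "\<psi> \<in> H" by blast
  obtain \<phi>' where s': "\<phi>' \<in> H" "\<phi>' \<circ> \<phi> = id" using H_inv[OF HS s] by blast
  have "\<psi> \<circ> \<phi>' \<in> H" using H_comp[OF HS p(2) s'(1)] .
  moreover have "p = (map (\<psi> \<circ> \<phi>') (map \<phi> a), map (\<psi> \<circ> \<phi>') (map \<phi> b))"
  proof -
    have "map (\<psi> \<circ> \<phi>') (map \<phi> a) = map (\<psi> \<circ> (\<phi>' \<circ> \<phi>)) a" by (simp add: comp_assoc)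
    moreover have "map (\<psi> \<circ> \<phi>') (map \<phi> b) = map (\<psi> \<circ> (\<phi>' \<circ> \<phi>)) b" by (simp add: comp_assoc)
    ultimately show ?thesis using p s' by simp
  qed
  ultimately show "p \<in> {(map \<psi> (map \<phi> a), map \<psi> (map \<phi> b)) | \<psi>. \<psi> \<in> H}" by blast
qed

lemma That_cls_orb:
  assumes HS: "subgroup H (sym_group n)"
  shows "That_cls H {(map \<phi> a, map \<phi> b) | \<phi>. \<phi> \<in> H} = That H a b"
proof -
  let ?w = "{(map \<phi> a, map \<phi> b) | \<phi>. \<phi> \<in> H}"
  have "(a, b) \<in> ?w" using H_id[OF HS] by (intro CollectI exI[of _ id]) simp
  then have "(SOME p. p \<in> ?w) \<in> ?w" by (rule someI)
  then obtain \<phi> where ph: "(SOME p. p \<in> ?w) = (map \<phi> a, map \<phi> b)" "\<phi> \<in> H" by blast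
  show ?thesis unfolding That_cls_def Let_def ph(1) using That_shift_in[OF HS ph(2)] by simp
qed

lemma WH_fin: "finite (WH H n k l)"
proof -
  have "WH H n k l \<subseteq> (\<lambda>p. {(map \<phi> (fst p), map \<phi> (snd p)) | \<phi>. \<phi> \<in> H}) ` (idx n k \<times> idx n l)"
  proof
    fix w assume "w \<in> WH H n k l"
    then obtain a b where "w = {(map \<phi> a, map \<phi> b) | \<phi>. \<phi> \<in> H}" "a \<in> idx n k" "b \<in> idx n l"
      unfolding WH_def by blast
    then show "w \<in> (\<lambda>p. {(map \<phi> (fst p), map \<phi> (snd p)) | \<phi>. \<phi> \<in> H}) ` (idx n k \<times> idx n l)"
      by (intro image_eqI[of _ _ "(a, b)"]) auto
  qed
  then show ?thesis by (rule finite_subset) (intro finite_imageI finite_cartesian_product idx_fin)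
qed

lemma lin_indep:
  assumes HS: "subgroup H (sym_group n)"
    and c: "(\<lambda>j i. \<Sum>w\<in>WH H n k l. c w * That_cls H w j i) = (\<lambda>j i. 0)"
    and w0: "w0 \<in> WH H n k l"
  shows "c w0 = 0"
proof -
  obtain a b where w0': "w0 = {(map \<phi> a, map \<phi> b) | \<phi>. \<phi> \<in> H}" "a \<in> idx n k" "b \<in> idx n l"
    using w0 unfolding WH_def by blast
  have sum0: "(\<Sum>w\<in>WH H n k l. c w * That_cls H w b a) = 0" using fun_cong[OF fun_cong[OF c, of b], of a] by simp
  have others: "\<forall>w\<in>WH H n k l - {w0}. c w * That_cls H w b a = 0"
  proof
    fix w assume w: "w \<in> WH H n k l - {w0}"
    then obtain a' b' where w': "w = {(map \<phi> a', map \<phi> b') | \<phi>. \<phi> \<in> H}"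
      unfolding WH_def by blast
    have "That H a' b' b a = 0"
    proof (rule ccontr)
      assume "That H a' b' b a \<noteq> 0"
      then obtain \<phi> where ph: "\<phi> \<in> H" "map \<phi> a' = a" "map \<phi> b' = b" using That_nz by blast
      have "w0 = w" using orb_shift[OF HS ph(1), of a' b'] ph w' w0'(1) by simp
      then show False using w by blast
    qed
    then show "c w * That_cls H w b a = 0" using That_cls_orb[OF HS] w' by simp
  qed
  have "(\<Sum>w\<in>WH H n k l. c w * That_cls H w b a) = c w0 * That_cls H w0 b a + (\<Sum>w\<in>WH H n k l - {w0}. c w * That_cls H w b a)"
    by (rule sum.remove[OF WH_fin w0])
  also have "(\<Sum>w\<in>WH H n k l - {w0}. c w * That_cls H w b a) = 0" by (rule sum.neutral[OF others])
  finally have "c w0 * That H a b b a = 0" using sum0 That_cls_orb[OF HS] w0'(1) by simp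
  then show ?thesis using That_pos[OF HS, of a b] by simp
qed

theorem theorem5p11:
  fixes n k l :: nat and H :: "(nat \<Rightarrow> nat) set" and A :: "nat list set"
  assumes "subgroup H (sym_group n)"
    and "normal A (Z2free n)"
    and "\<forall>\<sigma>\<in>H. map \<sigma> ` A = A"
  shows "Mor n H A k l = cspan {That H a b | a b. a \<in> idx n k \<and> b \<in> idx n l \<and> red (a @ rev b) \<in> A}
    \<and> (\<forall>c. (\<lambda>j i. \<Sum>w\<in>WH H n k l. c w * That_cls H w j i) = (\<lambda>j i. 0)
             \<longrightarrow> (\<forall>w\<in>WH H n k l. c w = 0))"
proof (intro conjI allI impI ballI)
  show "Mor n H A k l = cspan {That H a b | a b. a \<in> idx n k \<and> b \<in> idx n l \<and> red (a @ rev b) \<in> A}"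
    using Mor_char[OF assms] PT_span[OF assms(1) assms(3)] by simp
next
  fix c w assume "(\<lambda>j i. \<Sum>w\<in>WH H n k l. c w * That_cls H w j i) = (\<lambda>j i. 0)" "w \<in> WH H n k l"
  then show "c w = 0" using lin_indep[OF assms(1)] by blast
qed

end
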